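(* Read's space $\mathcal R=(c_0,|||\cdot|||)$ is not locally uniformly rotund: there exist $x$ with $|||x|||=1$ and a sequence $(x_n)$ with $|||x_n|||=1$ and $|||x+x_n|||\to2$ such that $(x_n)$ does not converge to $x$ in norm.
   Context: Let $c_{00}(\mathbb Q)$ be the set of finitely supported sequences with rational coefficients, and let $(u_n)_{n\in\mathbb N}$ be a sequence in $c_{00}(\mathbb Q)$ which lists every element of $c_{00}(\mathbb Q)$ infinitely many times. Let $(a_n)_{n\in\mathbb N}$ be a strictly increasing sequence of positive integers with $a_n>\max\operatorname{supp} u_n$ and $a_n>\|u_n\|_1$ for every $n$. $(e_n)$ denotes the canonical unit vectors and $\langle x,y\rangle=\sum_n x_ny_n$. Read's norm on $c_0$ is $|||x||| = \|x\|_\infty + \sum_{n} 2^{-a_n^2}|\langle x, u_n - e_{a_n}\rangle|$, and Read's space is $\mathcal R=(c_0,|||\cdot|||)$ (real scalars). A Banach space is locally uniformly rotund if for every $x$ in the unit sphere and every sequence $(x_n)$ in the unit sphere with $\|x+x_n\|\to 2$ one has $\|x_n-x\|\to0$. *)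

theory Defs
  imports "HOL-Analysis.Analysis"
begin

definition c0 :: "(nat \<Rightarrow> real) set" where
  "c0 = {x. x \<longlonglongrightarrow> 0}"

definition supp :: "(nat \<Rightarrow> real) \<Rightarrow> nat set" where
  "supp v = {k. v k \<noteq> 0}"

definition c00Q :: "(nat \<Rightarrow> real) set" where
  "c00Q = {v. finite (supp v) \<and> (\<forall>k. v k \<in> \<rat>)}"

definition l1norm :: "(nat \<Rightarrow> real) \<Rightarrow> real" where
  "l1norm v = (\<Sum>k\<in>supp v. \<bar>v k\<bar>)"

definition supnorm :: "(nat \<Rightarrow> real) \<Rightarrow> real" where
  "supnorm x = (SUP k. \<bar>x k\<bar>)"

definition unitvec :: "nat \<Rightarrow> nat \<Rightarrow> real" where
  "unitvec m = (\<lambda>k. if k = m then 1 else 0)"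

definition pairing :: "(nat \<Rightarrow> real) \<Rightarrow> (nat \<Rightarrow> real) \<Rightarrow> real" where
  "pairing x y = (\<Sum>k\<in>supp y. x k * y k)"

definition read_data :: "(nat \<Rightarrow> nat \<Rightarrow> real) \<Rightarrow> (nat \<Rightarrow> nat) \<Rightarrow> bool" where
  "read_data u a \<longleftrightarrow>
     (\<forall>n. u n \<in> c00Q) \<and>
     (\<forall>v\<in>c00Q. infinite {n. u n = v}) \<and>
     strict_mono a \<and> (\<forall>n. 0 < a n) \<and>
     (\<forall>n. \<forall>k\<in>supp (u n). k < a n) \<and>
     (\<forall>n. l1norm (u n) < real (a n))"

definition read_norm :: "(nat \<Rightarrow> nat \<Rightarrow> real) \<Rightarrow> (nat \<Rightarrow> nat) \<Rightarrow> (nat \<Rightarrow> real) \<Rightarrow> real" where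
  "read_norm u a x = supnorm x +
     (\<Sum>n. (1/2) ^ ((a n)^2) * \<bar>pairing x (\<lambda>k. u n k - unitvec (a n) k)\<bar>)"

end

theory Submission
  imports Defs
begin

definition EE :: "real \<Rightarrow> real \<Rightarrow> nat \<Rightarrow> nat \<Rightarrow> real" where
  "EE c d m = (\<lambda>k. c * unitvec 0 k + d * unitvec m k)"

definition vv :: "(nat \<Rightarrow> nat \<Rightarrow> real) \<Rightarrow> (nat \<Rightarrow> nat) \<Rightarrow> nat \<Rightarrow> nat \<Rightarrow> real" where
  "vv u a n k = u n k - unitvec (a n) k"

lemma wbound:
  fixes A n m :: nat
  assumes "n \<le> A" "m \<le> A"
  shows "(1/2::real)^(A^2) * (real A + 1) \<le> 8 * (1/2)^n * (1/2)^m"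
proof -
  have h1: "real A + 1 \<le> 2^A"
  proof -
    have "A < 2^A" by simp
    hence "A + 1 \<le> (2::nat)^A" by linarith
    hence "real (A + 1) \<le> real ((2::nat)^A)" by linarith
    thus ?thesis by simp
  qed
  have h2: "3*A \<le> A^2 + 3"
  proof (cases "A \<le> 2")
    case True
    then have "A = 0 \<or> A = 1 \<or> A = 2" by auto
    then show ?thesis by (auto simp: power2_eq_square)
  next
    case False
    then have "3 * A \<le> A * A" using mult_le_mono1[of 3 A A] by simp
    then show ?thesis unfolding power2_eq_square by linarith
  qed
  have "(2::real)^n * 2^m * (real A + 1) \<le> 2^A * 2^A * 2^A"
    using h1 assms by (intro mult_mono) (auto intro: power_increasing)
  also have "\<dots> = 2^(A+A+A)" by (simp add: power_add)
  also have "\<dots> = 2^(3*A)" by (rule arg_cong[where f="power 2"]) simp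
  also have "\<dots> \<le> 2^(A^2+3)" using h2 by (intro power_increasing) auto
  also have "\<dots> = 8 * 2^(A^2)" by (simp add: power_add)
  finally have h: "(2::real)^n * 2^m * (real A + 1) \<le> 8 * 2^(A^2)" .
  have "(1/2::real)^(A^2) * (real A + 1) = (real A + 1) / 2^(A^2)"
    by (simp add: power_divide)
  also have "\<dots> \<le> 8 / (2^n * 2^m)"
    using h by (simp add: divide_simps mult_ac)
  also have "\<dots> = 8 * (1/2)^n * (1/2)^m" by (simp add: power_divide)
  finally show ?thesis .
qed

lemma supp_vv: "supp (vv u a n) \<subseteq> insert (a n) (supp (u n))"
  by (auto simp: supp_def vv_def unitvec_def)

definition ww :: "(nat \<Rightarrow> nat) \<Rightarrow> nat \<Rightarrow> real" where
  "ww a n = (1/2::real)^((a n)^2)"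

definition SS :: "(nat \<Rightarrow> nat \<Rightarrow> real) \<Rightarrow> (nat \<Rightarrow> nat) \<Rightarrow> real \<Rightarrow> real \<Rightarrow> nat \<Rightarrow> real" where
  "SS u a c d m = (\<Sum>n. ww a n * \<bar>c * vv u a n 0 + d * vv u a n m\<bar>)"

lemma ww_pos: "0 < ww a n" by (simp add: ww_def)


context
  fixes u :: "nat \<Rightarrow> nat \<Rightarrow> real" and a :: "nat \<Rightarrow> nat"
  assumes rd: "read_data u a"
begin

lemma fin_vv: "finite (supp (vv u a n))"
proof -
  have "u n \<in> c00Q" using rd by (simp add: read_data_def)
  hence "finite (supp (u n))" by (simp add: c00Q_def)
  thus ?thesis using supp_vv by (meson finite_insert finite_subset)
qed

lemma u_le_l1: "\<bar>u n k\<bar> \<le> l1norm (u n)"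
proof -
  have "u n \<in> c00Q" using rd by (simp add: read_data_def)
  hence f: "finite (supp (u n))" by (simp add: c00Q_def)
  show ?thesis
  proof (cases "k \<in> supp (u n)")
    case True
    then show ?thesis unfolding l1norm_def
      using f by (intro member_le_sum) auto
  next
    case False
    then have "u n k = 0" by (simp add: supp_def)
    then show ?thesis unfolding l1norm_def by (simp add: sum_nonneg)
  qed
qed

lemma vv_bound: "\<bar>vv u a n k\<bar> \<le> real (a n) + 1"
proof -
  have "l1norm (u n) < real (a n)" using rd by (simp add: read_data_def)
  moreover have "\<bar>vv u a n k\<bar> \<le> \<bar>u n k\<bar> + \<bar>unitvec (a n) k\<bar>"
    unfolding vv_def by (rule abs_triangle_ineq4)
  moreover have "\<bar>unitvec (a n) k\<bar> \<le> 1" by (simp add: unitvec_def)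
  ultimately show ?thesis using u_le_l1[of n k] by linarith
qed

lemma vv_zero: "a n < k \<Longrightarrow> vv u a n k = 0"
proof -
  assume "a n < k"
  have "\<forall>j\<in>supp (u n). j < a n" using rd by (simp add: read_data_def)
  hence "k \<notin> supp (u n)" using \<open>a n < k\<close> by auto
  thus ?thesis using \<open>a n < k\<close> by (simp add: vv_def supp_def unitvec_def)
qed

lemma pairing_EE: "m \<noteq> 0 \<Longrightarrow> pairing (EE c d m) (vv u a n) = c * vv u a n 0 + d * vv u a n m"
proof -
  let ?S = "supp (vv u a n)"
  have f: "finite ?S" by (rule fin_vv)
  have d: "(\<Sum>k\<in>?S. unitvec j k * vv u a n k) = vv u a n j" for j
  proof -
    have "(\<Sum>k\<in>?S. unitvec j k * vv u a n k) = (\<Sum>k\<in>?S. if j = k then vv u a n k else 0)"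
      by (intro sum.cong) (auto simp: unitvec_def)
    also have "\<dots> = (if j \<in> ?S then vv u a n j else 0)" using f by simp
    also have "\<dots> = vv u a n j" by (auto simp: supp_def)
    finally show ?thesis .
  qed
  have "pairing (EE c d m) (vv u a n) = (\<Sum>k\<in>?S. c * (unitvec 0 k * vv u a n k) + d * (unitvec m k * vv u a n k))"
    unfolding pairing_def EE_def by (intro sum.cong) (auto simp: algebra_simps)
  also have "\<dots> = c * vv u a n 0 + d * vv u a n m"
    by (simp add: sum.distrib sum_distrib_left[symmetric] d)
  finally show ?thesis .
qed

lemma term_bound:
  "ww a n * \<bar>c * vv u a n 0 + d * vv u a n m\<bar> \<le> (\<bar>c\<bar> + \<bar>d\<bar>) * (8 * (1/2)^n)"
proof -
  have sa: "strict_mono a" using rd by (simp add: read_data_def)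
  have na: "n \<le> a n" using seq_suble[OF sa] .
  have "\<bar>c * vv u a n 0 + d * vv u a n m\<bar> \<le> \<bar>c\<bar> * \<bar>vv u a n 0\<bar> + \<bar>d\<bar> * \<bar>vv u a n m\<bar>"
    by (metis abs_mult abs_triangle_ineq)
  also have "\<dots> \<le> \<bar>c\<bar> * (real (a n) + 1) + \<bar>d\<bar> * (real (a n) + 1)"
    using vv_bound by (intro add_mono mult_left_mono) auto
  finally have h: "\<bar>c * vv u a n 0 + d * vv u a n m\<bar> \<le> (\<bar>c\<bar> + \<bar>d\<bar>) * (real (a n) + 1)"
    by (simp add: algebra_simps)
  have "ww a n * \<bar>c * vv u a n 0 + d * vv u a n m\<bar> \<le> ww a n * ((\<bar>c\<bar> + \<bar>d\<bar>) * (real (a n) + 1))"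
    using h ww_pos[of a n] by (intro mult_left_mono) auto
  also have "\<dots> = (\<bar>c\<bar> + \<bar>d\<bar>) * (ww a n * (real (a n) + 1))" by simp
  also have "\<dots> \<le> (\<bar>c\<bar> + \<bar>d\<bar>) * (8 * (1/2)^n)"
    using wbound[of n "a n" 0] na unfolding ww_def by (intro mult_left_mono) auto
  finally show ?thesis .
qed

lemma summ: "summable (\<lambda>n. ww a n * \<bar>c * vv u a n 0 + d * vv u a n m\<bar>)"
proof (rule summable_comparison_test')
  show "summable (\<lambda>n. (\<bar>c\<bar> + \<bar>d\<bar>) * (8 * (1/2::real)^n))"
    by (intro summable_mult summable_geometric) auto
  show "norm (ww a n * \<bar>c * vv u a n 0 + d * vv u a n m\<bar>) \<le> (\<bar>c\<bar> + \<bar>d\<bar>) * (8 * (1/2)^n)" for n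
    using term_bound[of n c d m] ww_pos[of a n] by simp
qed

lemma summ1: "summable (\<lambda>n. ww a n * \<bar>vv u a n k\<bar>)"
  using summ[of 0 1 k] by simp

lemma Q_term: "ww a n * \<bar>vv u a n m\<bar> \<le> 8 * (1/2)^m * (1/2)^n"
proof (cases "a n < m")
  case True
  then show ?thesis using vv_zero by simp
next
  case False
  have sa: "strict_mono a" using rd by (simp add: read_data_def)
  have na: "n \<le> a n" using seq_suble[OF sa] .
  have "ww a n * \<bar>vv u a n m\<bar> \<le> ww a n * (real (a n) + 1)"
    using vv_bound ww_pos[of a n] by (intro mult_left_mono) auto
  also have "\<dots> \<le> 8 * (1/2)^n * (1/2)^m"
    using wbound[of n "a n" m] na False unfolding ww_def by auto
  finally show ?thesis by (simp add: mult_ac)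
qed

lemma Q_lim: "(\<lambda>m. \<Sum>n. ww a n * \<bar>vv u a n m\<bar>) \<longlonglongrightarrow> 0"
proof (rule tendsto_sandwich)
  show "\<forall>\<^sub>F m in sequentially. 0 \<le> (\<Sum>n. ww a n * \<bar>vv u a n m\<bar>)"
    using summ1 ww_pos by (intro always_eventually allI suminf_nonneg) (auto intro!: mult_nonneg_nonneg less_imp_le[OF ww_pos])
  have g: "(\<Sum>n. 8 * (1/2::real)^m * (1/2)^n) = 8 * (1/2)^m * 2" for m
    by (subst suminf_mult) (auto simp: suminf_geometric)
  show "\<forall>\<^sub>F m in sequentially. (\<Sum>n. ww a n * \<bar>vv u a n m\<bar>) \<le> 8 * (1/2)^m * 2"
  proof (intro always_eventually allI)
    fix m
    have "(\<Sum>n. ww a n * \<bar>vv u a n m\<bar>) \<le> (\<Sum>n. 8 * (1/2::real)^m * (1/2)^n)"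
      by (intro suminf_le Q_term summ1 summable_mult summable_geometric) auto
    thus "(\<Sum>n. ww a n * \<bar>vv u a n m\<bar>) \<le> 8 * (1/2)^m * 2" using g by simp
  qed
  show "(\<lambda>m. 0::real) \<longlonglongrightarrow> 0" by simp
  show "(\<lambda>m. 8 * (1/2::real)^m * 2) \<longlonglongrightarrow> 0"
    by (intro tendsto_mult_right_zero tendsto_mult_left_zero LIMSEQ_power_zero) auto
qed

lemma SS_upper: "SS u a c d m \<le> \<bar>c\<bar> * (\<Sum>n. ww a n * \<bar>vv u a n 0\<bar>) + \<bar>d\<bar> * (\<Sum>n. ww a n * \<bar>vv u a n m\<bar>)"
proof -
  have "SS u a c d m \<le> (\<Sum>n. \<bar>c\<bar> * (ww a n * \<bar>vv u a n 0\<bar>) + \<bar>d\<bar> * (ww a n * \<bar>vv u a n m\<bar>))"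
    unfolding SS_def
  proof (intro suminf_le summ summable_add summable_mult summ1 allI)
    fix n
    have "\<bar>c * vv u a n 0 + d * vv u a n m\<bar> \<le> \<bar>c\<bar> * \<bar>vv u a n 0\<bar> + \<bar>d\<bar> * \<bar>vv u a n m\<bar>"
      by (metis abs_mult abs_triangle_ineq)
    hence "ww a n * \<bar>c * vv u a n 0 + d * vv u a n m\<bar> \<le> ww a n * (\<bar>c\<bar> * \<bar>vv u a n 0\<bar> + \<bar>d\<bar> * \<bar>vv u a n m\<bar>)"
      using ww_pos[of a n] by (intro mult_left_mono) auto
    thus "ww a n * \<bar>c * vv u a n 0 + d * vv u a n m\<bar> \<le> \<bar>c\<bar> * (ww a n * \<bar>vv u a n 0\<bar>) + \<bar>d\<bar> * (ww a n * \<bar>vv u a n m\<bar>)"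
      by (simp add: algebra_simps)
  qed
  also have "\<dots> = \<bar>c\<bar> * (\<Sum>n. ww a n * \<bar>vv u a n 0\<bar>) + \<bar>d\<bar> * (\<Sum>n. ww a n * \<bar>vv u a n m\<bar>)"
    by (subst suminf_add[symmetric]) (auto intro: summable_mult summ1 simp: suminf_mult summ1)
  finally show ?thesis .
qed

lemma SS_lower: "\<bar>c\<bar> * (\<Sum>n. ww a n * \<bar>vv u a n 0\<bar>) - \<bar>d\<bar> * (\<Sum>n. ww a n * \<bar>vv u a n m\<bar>) \<le> SS u a c d m"
proof -
  have "\<bar>c\<bar> * (\<Sum>n. ww a n * \<bar>vv u a n 0\<bar>) - \<bar>d\<bar> * (\<Sum>n. ww a n * \<bar>vv u a n m\<bar>)
      = (\<Sum>n. \<bar>c\<bar> * (ww a n * \<bar>vv u a n 0\<bar>) - \<bar>d\<bar> * (ww a n * \<bar>vv u a n m\<bar>))"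
    by (subst suminf_diff[symmetric]) (auto intro: summable_mult summ1 simp: suminf_mult summ1)
  also have "\<dots> \<le> SS u a c d m"
    unfolding SS_def
  proof (intro suminf_le summ summable_diff summable_mult summ1 allI)
    fix n
    have "\<bar>c\<bar> * \<bar>vv u a n 0\<bar> - \<bar>d\<bar> * \<bar>vv u a n m\<bar> \<le> \<bar>c * vv u a n 0 + d * vv u a n m\<bar>"
      using abs_triangle_ineq[of "c * vv u a n 0 + d * vv u a n m" "-(d * vv u a n m)"] by (simp add: abs_mult)
    hence "ww a n * (\<bar>c\<bar> * \<bar>vv u a n 0\<bar> - \<bar>d\<bar> * \<bar>vv u a n m\<bar>) \<le> ww a n * \<bar>c * vv u a n 0 + d * vv u a n m\<bar>"
      using ww_pos[of a n] by (intro mult_left_mono) auto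
    thus "\<bar>c\<bar> * (ww a n * \<bar>vv u a n 0\<bar>) - \<bar>d\<bar> * (ww a n * \<bar>vv u a n m\<bar>) \<le> ww a n * \<bar>c * vv u a n 0 + d * vv u a n m\<bar>"
      by (simp add: algebra_simps)
  qed
  finally show ?thesis .
qed

lemma SS_c0: "SS u a c 0 m = \<bar>c\<bar> * (\<Sum>n. ww a n * \<bar>vv u a n 0\<bar>)"
  unfolding SS_def
  by (subst suminf_mult[symmetric]) (auto intro: summ1 simp: abs_mult mult_ac)

lemma SS_scale: "0 \<le> b \<Longrightarrow> SS u a (b * c) (b * d) m = b * SS u a c d m"
  unfolding SS_def
proof -
  assume b: "0 \<le> b"
  have "(\<Sum>n. ww a n * \<bar>b * c * vv u a n 0 + b * d * vv u a n m\<bar>) = (\<Sum>n. b * (ww a n * \<bar>c * vv u a n 0 + d * vv u a n m\<bar>))"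
  proof (rule arg_cong[where f=suminf], rule ext)
    fix n
    have "b * c * vv u a n 0 + b * d * vv u a n m = b * (c * vv u a n 0 + d * vv u a n m)"
      by (simp add: algebra_simps)
    thus "ww a n * \<bar>b * c * vv u a n 0 + b * d * vv u a n m\<bar> = b * (ww a n * \<bar>c * vv u a n 0 + d * vv u a n m\<bar>)"
      using b by (simp add: abs_mult)
  qed
  also have "\<dots> = b * (\<Sum>n. ww a n * \<bar>c * vv u a n 0 + d * vv u a n m\<bar>)"
    by (rule suminf_mult[OF summ])
  finally show "(\<Sum>n. ww a n * \<bar>b * c * vv u a n 0 + b * d * vv u a n m\<bar>) = b * (\<Sum>n. ww a n * \<bar>c * vv u a n 0 + d * vv u a n m\<bar>)" .
qed

lemma supnorm_EE: "m \<noteq> 0 \<Longrightarrow> supnorm (EE c d m) = max \<bar>c\<bar> \<bar>d\<bar>"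
proof -
  assume m: "m \<noteq> 0"
  have v: "EE c d m k = (if k = 0 then c else if k = m then d else 0)" for k
    using m by (simp add: EE_def unitvec_def)
  show ?thesis unfolding supnorm_def
  proof (rule cSup_eq_maximum)
    show "max \<bar>c\<bar> \<bar>d\<bar> \<in> range (\<lambda>k. \<bar>EE c d m k\<bar>)"
    proof (cases "\<bar>d\<bar> \<le> \<bar>c\<bar>")
      case True
      then show ?thesis using v[of 0] by (intro image_eqI[of _ _ 0]) (auto simp: max_def)
    next
      case False
      then show ?thesis using v[of m] m by (intro image_eqI[of _ _ m]) (auto simp: max_def)
    qed
    show "x \<le> max \<bar>c\<bar> \<bar>d\<bar>" if "x \<in> range (\<lambda>k. \<bar>EE c d m k\<bar>)" for x
      using that by (auto simp: v)
  qed
qed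

lemma c0_EE: "EE c d m \<in> c0"
  unfolding c0_def
proof (simp, rule tendsto_eventually)
  show "\<forall>\<^sub>F k in sequentially. EE c d m k = 0"
    unfolding eventually_sequentially
    by (rule exI[of _ "Suc m"]) (auto simp: EE_def unitvec_def)
qed

lemma rn_EE: "m \<noteq> 0 \<Longrightarrow> read_norm u a (EE c d m) = max \<bar>c\<bar> \<bar>d\<bar> + SS u a c d m"
proof -
  assume m: "m \<noteq> 0"
  have e: "(\<lambda>k. u n k - unitvec (a n) k) = vv u a n" for n by (rule ext) (simp add: vv_def)
  show ?thesis
    unfolding read_norm_def SS_def e using m
    by (simp add: supnorm_EE pairing_EE ww_def)
qed

lemma SS_nonneg: "0 \<le> SS u a c d m"
  unfolding SS_def using summ
  by (intro suminf_nonneg) (auto intro!: mult_nonneg_nonneg less_imp_le[OF ww_pos])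

end


theorem mainTheorem10:
  fixes u :: "nat \<Rightarrow> nat \<Rightarrow> real" and a :: "nat \<Rightarrow> nat"
  assumes "read_data u a"
  shows "\<exists>x xs. x \<in> c0 \<and> read_norm u a x = 1 \<and>
           (\<forall>n. xs n \<in> c0 \<and> read_norm u a (xs n) = 1) \<and>
           (\<lambda>n. read_norm u a (\<lambda>k. x k + xs n k)) \<longlonglongrightarrow> 2 \<and>
           \<not> ((\<lambda>n. read_norm u a (\<lambda>k. xs n k - x k)) \<longlonglongrightarrow> 0)"
proof -
  note rd = assms
  define P where "P = (\<Sum>n. ww a n * \<bar>vv u a n 0\<bar>)"
  define Q where "Q = (\<lambda>m. \<Sum>n. ww a n * \<bar>vv u a n m\<bar>)"
  define R where "R = (\<lambda>m. SS u a 1 (1/2) m)"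
  define \<alpha> where "\<alpha> = 1 / (1 + P)"
  define \<beta> where "\<beta> = (\<lambda>n. 1 / (1 + R (Suc n)))"
  define x where "x = EE \<alpha> 0 1"
  define xs where "xs = (\<lambda>n. EE (\<beta> n) (\<beta> n / 2) (Suc n))"
  have P0: "0 \<le> P" unfolding P_def using SS_c0[OF rd, of 1 1] SS_nonneg[OF rd, of 1 0 1] by simp
  have Q0: "0 \<le> Q m" for m unfolding Q_def using SS_nonneg[OF rd, of 0 1 m] by (simp add: SS_def)
  have R0: "0 \<le> R m" for m unfolding R_def by (rule SS_nonneg[OF rd])
  have al: "0 < \<alpha>" unfolding \<alpha>_def using P0 by simp
  have be: "0 < \<beta> n" for n unfolding \<beta>_def using R0[of "Suc n"] by simp
  have Ql: "(\<lambda>n. Q (Suc n)) \<longlonglongrightarrow> 0"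
    using Q_lim[OF rd] unfolding Q_def by (rule LIMSEQ_Suc)
  have Rlo: "P - Q m / 2 \<le> R m" for m
    using SS_lower[OF rd, of 1 "1/2" m] unfolding R_def P_def Q_def by simp
  have Rhi: "R m \<le> P + Q m / 2" for m
    using SS_upper[OF rd, of 1 "1/2" m] unfolding R_def P_def Q_def by simp
  have RL: "(\<lambda>n. R (Suc n)) \<longlonglongrightarrow> P"
  proof (rule tendsto_sandwich)
    show "\<forall>\<^sub>F n in sequentially. P - Q (Suc n) / 2 \<le> R (Suc n)" using Rlo by simp
    show "\<forall>\<^sub>F n in sequentially. R (Suc n) \<le> P + Q (Suc n) / 2" using Rhi by simp
    show "(\<lambda>n. P - Q (Suc n) / 2) \<longlonglongrightarrow> P" using Ql by (auto intro!: tendsto_eq_intros)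
    show "(\<lambda>n. P + Q (Suc n) / 2) \<longlonglongrightarrow> P" using Ql by (auto intro!: tendsto_eq_intros)
  qed
  have BL: "\<beta> \<longlonglongrightarrow> \<alpha>"
    unfolding \<beta>_def \<alpha>_def using RL P0 by (auto intro!: tendsto_eq_intros)
  have nx0: "read_norm u a x = \<alpha> + \<alpha> * P"
    unfolding x_def using rn_EE[OF rd, of 1 \<alpha> 0] SS_c0[OF rd, of \<alpha> 1] al
    by (simp add: P_def)
  have nx: "read_norm u a x = 1"
    unfolding nx0 \<alpha>_def using P0 by (simp add: field_simps)
  have nxs: "read_norm u a (xs n) = 1" for n
  proof -
    have "read_norm u a (xs n) = \<beta> n + \<beta> n * R (Suc n)"
      unfolding xs_def R_def using rn_EE[OF rd, of "Suc n" "\<beta> n" "\<beta> n / 2"]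
        SS_scale[OF rd, of "\<beta> n" 1 "1/2" "Suc n"] be[of n] by simp
    also have "\<dots> = 1" unfolding \<beta>_def using R0[of "Suc n"] by (simp add: field_simps)
    finally show ?thesis .
  qed
  have sumeq: "(\<lambda>k. x k + xs n k) = EE (\<alpha> + \<beta> n) (\<beta> n / 2) (Suc n)" for n
    by (rule ext) (simp add: x_def xs_def EE_def unitvec_def algebra_simps)
  have difeq: "(\<lambda>k. xs n k - x k) = EE (\<beta> n - \<alpha>) (\<beta> n / 2) (Suc n)" for n
    by (rule ext) (simp add: x_def xs_def EE_def unitvec_def algebra_simps)
  have lim2: "(\<lambda>n. read_norm u a (\<lambda>k. x k + xs n k)) \<longlonglongrightarrow> 2"
  proof (rule tendsto_sandwich)
    have eq: "read_norm u a (\<lambda>k. x k + xs n k) = (\<alpha> + \<beta> n) + SS u a (\<alpha> + \<beta> n) (\<beta> n / 2) (Suc n)" for n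
      unfolding sumeq using rn_EE[OF rd, of "Suc n" "\<alpha> + \<beta> n" "\<beta> n / 2"] al be[of n] by simp
    show "\<forall>\<^sub>F n in sequentially. (\<alpha> + \<beta> n) * (1 + P) - \<beta> n / 2 * Q (Suc n) \<le> read_norm u a (\<lambda>k. x k + xs n k)"
      using SS_lower[OF rd, of "\<alpha> + \<beta> n" "\<beta> n / 2" "Suc n" for n] al be
      unfolding eq P_def[symmetric]
      by (auto intro!: always_eventually simp: Q_def algebra_simps abs_of_pos add_pos_pos)
    show "\<forall>\<^sub>F n in sequentially. read_norm u a (\<lambda>k. x k + xs n k) \<le> (\<alpha> + \<beta> n) * (1 + P) + \<beta> n / 2 * Q (Suc n)"
      using SS_upper[OF rd, of "\<alpha> + \<beta> n" "\<beta> n / 2" "Suc n" for n] al be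
      unfolding eq P_def[symmetric]
      by (auto intro!: always_eventually simp: Q_def algebra_simps abs_of_pos add_pos_pos)
    have t: "2 = (\<alpha> + \<alpha>) * (1 + P)" unfolding \<alpha>_def using P0 by (simp add: field_simps)
    show "(\<lambda>n. (\<alpha> + \<beta> n) * (1 + P) - \<beta> n / 2 * Q (Suc n)) \<longlonglongrightarrow> 2"
      unfolding t using BL Ql al P0 by (auto intro!: tendsto_eq_intros)
    show "(\<lambda>n. (\<alpha> + \<beta> n) * (1 + P) + \<beta> n / 2 * Q (Suc n)) \<longlonglongrightarrow> 2"
      unfolding t using BL Ql al P0 by (auto intro!: tendsto_eq_intros)
  qed
  have nolim: "\<not> ((\<lambda>n. read_norm u a (\<lambda>k. xs n k - x k)) \<longlonglongrightarrow> 0)"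
  proof
    assume h: "(\<lambda>n. read_norm u a (\<lambda>k. xs n k - x k)) \<longlonglongrightarrow> 0"
    have ge: "\<beta> n / 2 \<le> read_norm u a (\<lambda>k. xs n k - x k)" for n
      unfolding difeq using rn_EE[OF rd, of "Suc n" "\<beta> n - \<alpha>" "\<beta> n / 2"]
        SS_nonneg[OF rd, of "\<beta> n - \<alpha>" "\<beta> n / 2" "Suc n"] be[of n]
        max.cobounded2[of "\<bar>\<beta> n - \<alpha>\<bar>" "\<beta> n / 2"] by linarith
    have "(\<lambda>n. \<beta> n / 2) \<longlonglongrightarrow> \<alpha> / 2" using BL by (auto intro!: tendsto_eq_intros)
    hence "\<alpha> / 2 \<le> 0" using h ge by (intro LIMSEQ_le) auto
    thus False using al by simp
  qed
  have cx: "x \<in> c0" unfolding x_def by (rule c0_EE[OF rd])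
  have cxs: "xs n \<in> c0" for n unfolding xs_def by (rule c0_EE[OF rd])
  show ?thesis
    apply (rule exI[of _ x], rule exI[of _ xs])
    using nx nxs lim2 nolim cx cxs by blast
qed

end
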